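(* Let $R$ be an integral domain (not a field) that is finitely stable and an LPI-domain, and assume every nonzero prime ideal of $R$ is contained in a unique maximal ideal (for instance, $R$ is one-dimensional). Then $R$ has finite character.
   Context: Let $R$ be an integral domain with quotient field $K\neq R$. For a nonzero ideal $I$ of $R$, $E(I):=(I:I)=\{x\in K: xI\subseteq I\}$. An ideal $I$ is locally principal if $IR_M$ is principal for every maximal ideal $M$ of $R$; it is invertible if $I(R:I)=R$, where $(R:I)=\{x\in K: xI\subseteq R\}$. $R$ is an LPI-domain if every locally principal nonzero ideal of $R$ is invertible. A nonzero ideal $I$ is stable if it is invertible as an ideal of the ring $E(I)$; $R$ is finitely stable if every nonzero finitely generated ideal of $R$ is stable. $R$ has finite character if every nonzero element of $R$ lies in only finitely many maximal ideals of $R$. *)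

theory Defs
  imports Main
begin

text \<open>Setting: R is a subring of a field K (of type 'k) and K is the quotient field of R.
  Ideals of R are subsets of R; fractional constructions live in K.\<close>

definition subring :: "'k::field set \<Rightarrow> bool" where
  "subring R \<longleftrightarrow> 0 \<in> R \<and> 1 \<in> R \<and> (\<forall>a\<in>R. \<forall>b\<in>R. a + b \<in> R \<and> a * b \<in> R \<and> - a \<in> R)"

definition quotient_field_is_UNIV :: "'k::field set \<Rightarrow> bool" where
  "quotient_field_is_UNIV R \<longleftrightarrow> (\<forall>x::'k. \<exists>a\<in>R. \<exists>b\<in>R. b \<noteq> 0 \<and> x = a / b)"

definition set_prod :: "'k::field set \<Rightarrow> 'k set \<Rightarrow> 'k set" where
  "set_prod A B = {x. \<exists>n::nat. \<exists>a b. (\<forall>i<n. a i \<in> A \<and> b i \<in> B) \<and> x = (\<Sum>i<n. a i * b i)}"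

definition ideal_of :: "'k::field set \<Rightarrow> 'k set \<Rightarrow> bool" where
  "ideal_of R I \<longleftrightarrow> I \<subseteq> R \<and> 0 \<in> I \<and> (\<forall>a\<in>I. \<forall>b\<in>I. a + b \<in> I) \<and> (\<forall>r\<in>R. \<forall>a\<in>I. r * a \<in> I)"

definition nonzero_ideal :: "'k::field set \<Rightarrow> 'k set \<Rightarrow> bool" where
  "nonzero_ideal R I \<longleftrightarrow> ideal_of R I \<and> I \<noteq> {0}"

definition prime_ideal_of :: "'k::field set \<Rightarrow> 'k set \<Rightarrow> bool" where
  "prime_ideal_of R P \<longleftrightarrow> ideal_of R P \<and> P \<noteq> R \<and> (\<forall>a\<in>R. \<forall>b\<in>R. a * b \<in> P \<longrightarrow> a \<in> P \<or> b \<in> P)"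

definition maximal_ideal_of :: "'k::field set \<Rightarrow> 'k set \<Rightarrow> bool" where
  "maximal_ideal_of R M \<longleftrightarrow> ideal_of R M \<and> M \<noteq> R \<and>
     (\<forall>J. ideal_of R J \<and> M \<subseteq> J \<longrightarrow> J = M \<or> J = R)"

definition fin_gen_ideal :: "'k::field set \<Rightarrow> 'k set \<Rightarrow> bool" where
  "fin_gen_ideal R I \<longleftrightarrow> (\<exists>F. finite F \<and> F \<subseteq> R \<and> I = set_prod R F)"

definition colon :: "'k::field set \<Rightarrow> 'k set \<Rightarrow> 'k set" where
  "colon A B = {x. \<forall>b\<in>B. x * b \<in> A}"

definition endo :: "'k::field set \<Rightarrow> 'k set" where
  "endo I = colon I I"

definition invertible_in :: "'k::field set \<Rightarrow> 'k set \<Rightarrow> bool" where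
  "invertible_in S I \<longleftrightarrow> set_prod I (colon S I) = S"

definition localization :: "'k::field set \<Rightarrow> 'k set \<Rightarrow> 'k set" where
  "localization R M = {a / s | a s. a \<in> R \<and> s \<in> R - M}"

definition ext_ideal :: "'k::field set \<Rightarrow> 'k set \<Rightarrow> 'k set \<Rightarrow> 'k set" where
  "ext_ideal R M I = set_prod I (localization R M)"

definition locally_principal :: "'k::field set \<Rightarrow> 'k set \<Rightarrow> bool" where
  "locally_principal R I \<longleftrightarrow> (\<forall>M. maximal_ideal_of R M \<longrightarrow>
     (\<exists>a. ext_ideal R M I = (\<lambda>y. a * y) ` localization R M))"

definition LPI_domain :: "'k::field set \<Rightarrow> bool" where
  "LPI_domain R \<longleftrightarrow> (\<forall>I. nonzero_ideal R I \<and> locally_principal R I \<longrightarrow> invertible_in R I)"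

definition stable_ideal :: "'k::field set \<Rightarrow> bool" where
  "stable_ideal I \<longleftrightarrow> invertible_in (endo I) I"

definition finitely_stable :: "'k::field set \<Rightarrow> bool" where
  "finitely_stable R \<longleftrightarrow> (\<forall>I. nonzero_ideal R I \<and> fin_gen_ideal R I \<longrightarrow> stable_ideal I)"

definition finite_character :: "'k::field set \<Rightarrow> bool" where
  "finite_character R \<longleftrightarrow> (\<forall>x\<in>R. x \<noteq> 0 \<longrightarrow> finite {M. maximal_ideal_of R M \<and> x \<in> M})"

end

theory Submission
  imports Defs
begin

lemma sr0: "subring R \<Longrightarrow> 0 \<in> R" by (simp add: subring_def)
lemma sr1: "subring R \<Longrightarrow> 1 \<in> R" by (simp add: subring_def)
lemma sradd: "subring R \<Longrightarrow> a \<in> R \<Longrightarrow> b \<in> R \<Longrightarrow> a + b \<in> R" by (simp add: subring_def)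
lemma srmul: "subring R \<Longrightarrow> a \<in> R \<Longrightarrow> b \<in> R \<Longrightarrow> a * b \<in> R" by (simp add: subring_def)

lemma id_sub: "ideal_of R I \<Longrightarrow> a \<in> I \<Longrightarrow> a \<in> R" by (auto simp: ideal_of_def)
lemma id0: "ideal_of R I \<Longrightarrow> 0 \<in> I" by (auto simp: ideal_of_def)
lemma idadd: "ideal_of R I \<Longrightarrow> a \<in> I \<Longrightarrow> b \<in> I \<Longrightarrow> a + b \<in> I" by (auto simp: ideal_of_def)
lemma idmul: "ideal_of R I \<Longrightarrow> r \<in> R \<Longrightarrow> a \<in> I \<Longrightarrow> r * a \<in> I" by (auto simp: ideal_of_def)
lemma idmul2: "ideal_of R I \<Longrightarrow> r \<in> R \<Longrightarrow> a \<in> I \<Longrightarrow> a * r \<in> I"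
  by (metis idmul mult.commute)

lemma id_one: "subring R \<Longrightarrow> ideal_of R I \<Longrightarrow> 1 \<in> I \<Longrightarrow> I = R"
  by (metis id_sub idmul2 mult_1 subsetI subset_antisym)

definition addel :: "'k::field set \<Rightarrow> 'k set \<Rightarrow> 'k \<Rightarrow> 'k set" where
  "addel R P a = {p + r * a | p r. p \<in> P \<and> r \<in> R}"

lemma addelI: "p \<in> P \<Longrightarrow> r \<in> R \<Longrightarrow> p + r * a \<in> addel R P a"
  unfolding addel_def by blast

lemma addelE: "x \<in> addel R P a \<Longrightarrow> (\<And>p r. x = p + r * a \<Longrightarrow> p \<in> P \<Longrightarrow> r \<in> R \<Longrightarrow> thesis) \<Longrightarrow> thesis"
  unfolding addel_def by blast

lemma ideal_add_elem:
  assumes "subring R" "ideal_of R P" "a \<in> R"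
  shows "ideal_of R (addel R P a)" and "P \<subseteq> addel R P a" and "a \<in> addel R P a"
proof -
  show "ideal_of R (addel R P a)"
    unfolding ideal_of_def
  proof (intro conjI ballI subsetI)
    fix x assume "x \<in> addel R P a"
    then obtain p r where "x = p + r * a" "p \<in> P" "r \<in> R" by (rule addelE)
    then show "x \<in> R" using assms by (meson id_sub sradd srmul)
  next
    have "0 + 0 * a \<in> addel R P a" using assms by (intro addelI id0 sr0)
    then show "0 \<in> addel R P a" by simp
  next
    fix x y assume "x \<in> addel R P a" "y \<in> addel R P a"
    then obtain p1 r1 p2 r2 where h: "x = p1 + r1 * a" "y = p2 + r2*a" "p1 \<in> P" "p2 \<in> P" "r1 \<in> R" "r2 \<in> R"
      by (metis addelE)
    have "(p1 + p2) + (r1 + r2) * a \<in> addel R P a" using h assms by (intro addelI idadd sradd)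
    moreover have "x + y = (p1 + p2) + (r1 + r2) * a" using h by (simp add: algebra_simps)
    ultimately show "x + y \<in> addel R P a" by simp
  next
    fix s x assume s: "s \<in> R" "x \<in> addel R P a"
    then obtain p1 r1 where h: "x = p1 + r1 * a" "p1 \<in> P" "r1 \<in> R" by (metis addelE)
    have "(s * p1) + (s * r1) * a \<in> addel R P a" using h s assms by (intro addelI idmul srmul)
    moreover have "s * x = (s * p1) + (s * r1) * a" using h by (simp add: algebra_simps)
    ultimately show "s * x \<in> addel R P a" by simp
  qed
  show "P \<subseteq> addel R P a"
  proof
    fix p assume "p \<in> P"
    then have "p + 0 * a \<in> addel R P a" using assms by (intro addelI sr0)
    then show "p \<in> addel R P a" by simp
  qed
  have "0 + 1 * a \<in> addel R P a" using assms by (intro addelI id0 sr1)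
  then show "a \<in> addel R P a" by simp
qed

lemma maximal_prime:
  assumes "subring R" "maximal_ideal_of R M"
  shows "prime_ideal_of R M"
  unfolding prime_ideal_of_def
proof (intro conjI ballI impI)
  show "ideal_of R M" "M \<noteq> R" using assms by (auto simp: maximal_ideal_of_def)
  fix a b assume ab: "a \<in> R" "b \<in> R" "a * b \<in> M"
  show "a \<in> M \<or> b \<in> M"
  proof (rule ccontr)
    assume nab: "\<not> (a \<in> M \<or> b \<in> M)"
    have im: "ideal_of R M" using assms by (auto simp: maximal_ideal_of_def)
    have "addel R M a = R"
      using ideal_add_elem[OF assms(1) im ab(1)] assms(2) nab
      unfolding maximal_ideal_of_def by blast
    then have "1 \<in> addel R M a" using sr1[OF assms(1)] by simp
    then obtain p1 r1 where 1: "1 = p1 + r1 * a" "p1 \<in> M" "r1 \<in> R" by (metis addelE)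
    have "addel R M b = R"
      using ideal_add_elem[OF assms(1) im ab(2)] assms(2) nab
      unfolding maximal_ideal_of_def by blast
    then have "1 \<in> addel R M b" using sr1[OF assms(1)] by simp
    then obtain p2 r2 where 2: "1 = p2 + r2 * b" "p2 \<in> M" "r2 \<in> R" by (metis addelE)
    have "1 = (p1 + r1 * a) * (p2 + r2 * b)" using 1 2 by simp
    also have "\<dots> = p1 * (p2 + r2 * b) + r1 * (a * p2) + (r1 * r2) * (a * b)" by (simp add: algebra_simps)
    also have "\<dots> \<in> M"
    proof -
      have "p2 + r2 * b \<in> R" using 2 ab assms(1) im by (meson id_sub sradd srmul)
      then have t1: "p1 * (p2 + r2 * b) \<in> M" using 1 im by (simp add: idmul2)
      have t2: "r1 * (a * p2) \<in> M" using 1 2 ab im by (simp add: idmul idmul2)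
      have t3: "(r1 * r2) * (a * b) \<in> M" using 1 2 ab im assms(1) by (simp add: idmul srmul)
      show ?thesis using t1 t2 t3 im by (simp add: idadd)
    qed
    finally have "1 \<in> M" .
    then show False using id_one[OF assms(1) im] \<open>M \<noteq> R\<close> by simp
  qed
qed


lemma zorn_ideal:
  assumes R: "subring R" and A: "ideal_of R A" and dis: "A \<inter> S = {}"
  shows "\<exists>P. ideal_of R P \<and> A \<subseteq> P \<and> P \<inter> S = {} \<and>
           (\<forall>Q. ideal_of R Q \<and> P \<subseteq> Q \<and> Q \<inter> S = {} \<longrightarrow> Q = P)"
proof -
  let ?C = "{Q. ideal_of R Q \<and> A \<subseteq> Q \<and> Q \<inter> S = {}}"
  have "\<exists>M\<in>?C. \<forall>X\<in>?C. M \<subseteq> X \<longrightarrow> X = M"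
  proof (rule subset_Zorn_nonempty)
    have "A \<in> ?C" using A dis by simp
    then show "?C \<noteq> {}" by auto
  next
    fix C assume ne: "C \<noteq> {}" and ch: "subset.chain ?C C"
    have ch2: "C \<subseteq> ?C \<and> (\<forall>X\<in>C. \<forall>Y\<in>C. X \<subseteq> Y \<or> Y \<subseteq> X)"
      using ch[unfolded subset_chain_def] .
    then have sub: "C \<subseteq> ?C" by (rule conjunct1)
    have idC: "ideal_of R X" and AX: "A \<subseteq> X" and SX: "X \<inter> S = {}" if "X \<in> C" for X
      using sub that by auto
    have tot: "X \<subseteq> Y \<or> Y \<subseteq> X" if "X \<in> C" "Y \<in> C" for X Y
      using ch2 that by simp
    have "ideal_of R (\<Union>C)"
      unfolding ideal_of_def
    proof (intro conjI ballI)
      show "\<Union>C \<subseteq> R" using idC id_sub by blast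
      obtain X where "X \<in> C" using ne by blast
      then show "0 \<in> \<Union>C" using idC id0 by blast
    next
      fix a b assume "a \<in> \<Union>C" "b \<in> \<Union>C"
      then obtain X Y where XY: "a \<in> X" "b \<in> Y" "X \<in> C" "Y \<in> C" by blast
      have iX: "ideal_of R X" and iY: "ideal_of R Y" using XY idC by auto
      show "a + b \<in> \<Union>C"
      proof (cases "X \<subseteq> Y")
        case True then have "a + b \<in> Y" using XY iY idadd by (metis subsetD)
        then show ?thesis using XY by blast
      next
        case False then have "Y \<subseteq> X" using tot XY by blast
        then have "a + b \<in> X" using XY iX idadd by (metis subsetD)
        then show ?thesis using XY by blast
      qed
    next
      fix r a assume "r \<in> R" "a \<in> \<Union>C"
      then obtain X where "a \<in> X" "X \<in> C" by blast
      then have "ideal_of R X" using idC by blast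
      then have "r * a \<in> X" using idmul \<open>r \<in> R\<close> \<open>a \<in> X\<close> by blast
      then show "r * a \<in> \<Union>C" using \<open>X \<in> C\<close> by blast
    qed
    moreover have "A \<subseteq> \<Union>C"
    proof -
      obtain X where "X \<in> C" using ne by blast
      then show ?thesis using AX by blast
    qed
    moreover have "\<Union>C \<inter> S = {}" using SX by blast
    ultimately show "\<Union>C \<in> ?C" by simp
  qed
  then obtain P where P: "P \<in> ?C" and mx: "\<forall>X\<in>?C. P \<subseteq> X \<longrightarrow> X = P" by (rule bexE)
  have "ideal_of R P \<and> A \<subseteq> P \<and> P \<inter> S = {} \<and>
           (\<forall>Q. ideal_of R Q \<and> P \<subseteq> Q \<and> Q \<inter> S = {} \<longrightarrow> Q = P)"
  proof (intro conjI allI impI)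
    show "ideal_of R P" "A \<subseteq> P" "P \<inter> S = {}" using P by simp_all
    fix Q assume Q: "ideal_of R Q \<and> P \<subseteq> Q \<and> Q \<inter> S = {}"
    then have "Q \<in> ?C" using \<open>A \<subseteq> P\<close> by auto
    then show "Q = P" using mx Q by simp
  qed
  then show ?thesis by (rule exI)
qed

lemma exists_prime:
  assumes R: "subring R" and A: "ideal_of R A" and dis: "A \<inter> S = {}"
    and S1: "1 \<in> S" and SR: "S \<subseteq> R" and Sm: "\<And>a b. a \<in> S \<Longrightarrow> b \<in> S \<Longrightarrow> a * b \<in> S"
  shows "\<exists>P. prime_ideal_of R P \<and> A \<subseteq> P \<and> P \<inter> S = {}"
proof -
  from zorn_ideal[OF R A dis] obtain P where PP: "ideal_of R P \<and> A \<subseteq> P \<and> P \<inter> S = {} \<and>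
           (\<forall>Q. ideal_of R Q \<and> P \<subseteq> Q \<and> Q \<inter> S = {} \<longrightarrow> Q = P)" by (rule exE)
  then have P: "ideal_of R P" "A \<subseteq> P" "P \<inter> S = {}" by simp_all
  have mx: "Q = P" if "ideal_of R Q" "P \<subseteq> Q" "Q \<inter> S = {}" for Q using PP that by simp
  have "prime_ideal_of R P"
    unfolding prime_ideal_of_def
  proof (intro conjI ballI impI)
    show "ideal_of R P" by fact
    show "P \<noteq> R" using P(3) S1 sr1[OF R] by auto
    fix a b assume ab: "a \<in> R" "b \<in> R" "a * b \<in> P"
    show "a \<in> P \<or> b \<in> P"
    proof (rule ccontr)
      assume nab: "\<not> (a \<in> P \<or> b \<in> P)"
      have "addel R P a \<inter> S \<noteq> {}"
      proof
        assume "addel R P a \<inter> S = {}"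
        then have "addel R P a = P" using ideal_add_elem[OF R P(1) ab(1)] by (intro mx)
        then show False using ideal_add_elem(3)[OF R P(1) ab(1)] nab by simp
      qed
      then obtain s1 where s1: "s1 \<in> S" "s1 \<in> addel R P a" by auto
      then obtain p1 r1 where 1: "s1 = p1 + r1 * a" "p1 \<in> P" "r1 \<in> R" by (metis addelE)
      have "addel R P b \<inter> S \<noteq> {}"
      proof
        assume "addel R P b \<inter> S = {}"
        then have "addel R P b = P" using ideal_add_elem[OF R P(1) ab(2)] by (intro mx)
        then show False using ideal_add_elem(3)[OF R P(1) ab(2)] nab by simp
      qed
      then obtain s2 where s2: "s2 \<in> S" "s2 \<in> addel R P b" by auto
      then obtain p2 r2 where 2: "s2 = p2 + r2 * b" "p2 \<in> P" "r2 \<in> R" by (metis addelE)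
      have "s1 * s2 = p1 * (p2 + r2 * b) + r1 * (a * p2) + (r1 * r2) * (a * b)"
        using 1 2 by (simp add: algebra_simps)
      also have "\<dots> \<in> P"
      proof -
        have "p2 + r2 * b \<in> R" using 2 ab R P(1) by (meson id_sub sradd srmul)
        then have t1: "p1 * (p2 + r2 * b) \<in> P" using 1 P(1) by (simp add: idmul2)
        have t2: "r1 * (a * p2) \<in> P" using 1 2 ab P(1) by (simp add: idmul idmul2)
        have t3: "(r1 * r2) * (a * b) \<in> P" using 1 2 ab P(1) R by (simp add: idmul srmul)
        show ?thesis using t1 t2 t3 P(1) by (simp add: idadd)
      qed
      finally show False using Sm[OF s1(1) s2(1)] P(3) by auto
    qed
  qed
  then show ?thesis using P by auto
qed

lemma exists_maximal:
  assumes R: "subring R" and A: "ideal_of R A" and one: "1 \<notin> A"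
  shows "\<exists>M. maximal_ideal_of R M \<and> A \<subseteq> M"
proof -
  have dis: "A \<inter> {1} = {}" using one by simp
  from zorn_ideal[OF R A dis] obtain P where PP: "ideal_of R P \<and> A \<subseteq> P \<and> P \<inter> {1} = {} \<and>
           (\<forall>Q. ideal_of R Q \<and> P \<subseteq> Q \<and> Q \<inter> {1} = {} \<longrightarrow> Q = P)" by (rule exE)
  then have P: "ideal_of R P" "A \<subseteq> P" "P \<inter> {1} = {}" by simp_all
  have mx: "Q = P" if "ideal_of R Q" "P \<subseteq> Q" "Q \<inter> {1} = {}" for Q using PP that by simp
  have "maximal_ideal_of R P"
    unfolding maximal_ideal_of_def
  proof (intro conjI allI impI)
    show "ideal_of R P" by fact
    show "P \<noteq> R" using P(3) sr1[OF R] by auto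
    fix J assume J: "ideal_of R J \<and> P \<subseteq> J"
    show "J = P \<or> J = R"
    proof (cases "1 \<in> J")
      case True then show ?thesis using id_one[OF R] J by simp
    next
      case False then have "J \<inter> {1} = {}" by simp
      then show ?thesis using mx J by simp
    qed
  qed
  then show ?thesis using P by auto
qed


definition Aof :: "'k::field set \<Rightarrow> 'k set \<Rightarrow> 'k \<Rightarrow> 'k set" where
  "Aof R N x = {r \<in> R. \<exists>s\<in>R. s \<notin> N \<and> (\<exists>t\<in>R. r * s = x * t)}"

lemma AofI: "r \<in> R \<Longrightarrow> s \<in> R \<Longrightarrow> s \<notin> N \<Longrightarrow> t \<in> R \<Longrightarrow> r * s = x * t \<Longrightarrow> r \<in> Aof R N x"
  unfolding Aof_def by blast

lemma AofE: "r \<in> Aof R N x \<Longrightarrow> (\<And>s t. r \<in> R \<Longrightarrow> s \<in> R \<Longrightarrow> s \<notin> N \<Longrightarrow> t \<in> R \<Longrightarrow> r * s = x * t \<Longrightarrow> thesis) \<Longrightarrow> thesis"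
  unfolding Aof_def by blast

lemma prime_mul: "prime_ideal_of R P \<Longrightarrow> a \<in> R \<Longrightarrow> b \<in> R \<Longrightarrow> a \<notin> P \<Longrightarrow> b \<notin> P \<Longrightarrow> a * b \<notin> P"
  unfolding prime_ideal_of_def by blast

lemma prime_ideal: "prime_ideal_of R P \<Longrightarrow> ideal_of R P"
  unfolding prime_ideal_of_def by blast

lemma max_ideal: "maximal_ideal_of R P \<Longrightarrow> ideal_of R P"
  unfolding maximal_ideal_of_def by blast

lemma max_one: "subring R \<Longrightarrow> maximal_ideal_of R M \<Longrightarrow> 1 \<notin> M"
  using id_one unfolding maximal_ideal_of_def by blast

lemma Aof_ideal:
  assumes R: "subring R" and N: "prime_ideal_of R N" and x: "x \<in> R"
  shows "ideal_of R (Aof R N x)"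
  unfolding ideal_of_def
proof (intro conjI ballI subsetI)
  fix r assume "r \<in> Aof R N x" then show "r \<in> R" by (rule AofE)
next
  have "1 \<notin> N" using N sr1[OF R] id_one[OF R] unfolding prime_ideal_of_def by blast
  then show "0 \<in> Aof R N x" using R by (intro AofI[of _ _ 1 _ 0]) (auto intro: sr0 sr1)
next
  fix a b assume "a \<in> Aof R N x" "b \<in> Aof R N x"
  then obtain s1 t1 s2 t2 where h: "a \<in> R" "s1 \<in> R" "s1 \<notin> N" "t1 \<in> R" "a * s1 = x * t1"
     "b \<in> R" "s2 \<in> R" "s2 \<notin> N" "t2 \<in> R" "b * s2 = x * t2" by (metis AofE)
  have "(a + b) * (s1 * s2) = (a * s1) * s2 + (b * s2) * s1" by (simp add: algebra_simps)
  also have "\<dots> = x * (t1 * s2 + t2 * s1)" using h by (simp add: algebra_simps)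
  finally have e: "(a + b) * (s1 * s2) = x * (t1 * s2 + t2 * s1)" .
  show "a + b \<in> Aof R N x"
    apply (rule AofI[OF _ _ _ _ e])
    using h R prime_mul[OF N h(2) h(7) h(3) h(8)] by (auto intro: sradd srmul)
next
  fix c a assume c: "c \<in> R" "a \<in> Aof R N x"
  then obtain s t where h: "a \<in> R" "s \<in> R" "s \<notin> N" "t \<in> R" "a * s = x * t" by (metis AofE)
  have e: "(c * a) * s = x * (c * t)" using h by (simp add: algebra_simps)
  show "c * a \<in> Aof R N x"
    apply (rule AofI[OF _ _ _ _ e])
    using h c R by (auto intro: srmul)
qed

lemma x_in_Aof:
  assumes R: "subring R" and N: "maximal_ideal_of R N" and x: "x \<in> R"
  shows "x \<in> Aof R N x"
  using R N x max_one[OF R N] by (intro AofI[of _ _ 1 _ 1]) (auto intro: sr1)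

lemma Aof_not_in:
  assumes R: "subring R" and N: "maximal_ideal_of R N" and M: "maximal_ideal_of R M"
    and MN: "M \<noteq> N" and x: "x \<in> R" "x \<noteq> 0"
    and H: "\<forall>P. prime_ideal_of R P \<and> P \<noteq> {0} \<longrightarrow> (\<exists>!M. maximal_ideal_of R M \<and> P \<subseteq> M)"
  shows "\<exists>a\<in>Aof R N x. a \<notin> M"
proof -
  have Np: "prime_ideal_of R N" and Mp: "prime_ideal_of R M" using maximal_prime R M N by auto
  define S where "S = {a * b | a b. a \<in> R \<and> a \<notin> M \<and> b \<in> R \<and> b \<notin> N}"
  have SI: "a * b \<in> S" if "a \<in> R" "a \<notin> M" "b \<in> R" "b \<notin> N" for a b
    using that unfolding S_def by blast
  have SE: "\<exists>a b. z = a * b \<and> a \<in> R \<and> a \<notin> M \<and> b \<in> R \<and> b \<notin> N" if "z \<in> S" for z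
    using that unfolding S_def by blast
  have M1: "1 \<notin> M" and N1: "1 \<notin> N" using max_one R M N by auto
  show ?thesis
  proof (cases "Aof R N x \<inter> S = {}")
    case True
    have S1: "1 \<in> S" using SI[of 1 1] M1 N1 sr1[OF R] by simp
    have SR: "S \<subseteq> R"
    proof
      fix z assume "z \<in> S" then obtain a b where "z = a * b" "a \<in> R" "b \<in> R" using SE by blast
      then show "z \<in> R" using R srmul by simp
    qed
    have Sm: "a * b \<in> S" if ha: "a \<in> S" "b \<in> S" for a b
    proof -
      obtain a1 a2 where A: "a = a1 * a2" "a1 \<in> R" "a1 \<notin> M" "a2 \<in> R" "a2 \<notin> N" using SE[OF ha(1)] by blast
      obtain b1 b2 where B: "b = b1 * b2" "b1 \<in> R" "b1 \<notin> M" "b2 \<in> R" "b2 \<notin> N" using SE[OF ha(2)] by blast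
      have "(a1 * b1) * (a2 * b2) \<in> S" using A B R prime_mul[OF Mp A(2) B(2) A(3) B(3)] prime_mul[OF Np A(4) B(4) A(5) B(5)]
        by (intro SI srmul) auto
      moreover have "a * b = (a1 * b1) * (a2 * b2)" using A B by (simp add: algebra_simps)
      ultimately show ?thesis by simp
    qed
    obtain P where P: "prime_ideal_of R P" "Aof R N x \<subseteq> P" "P \<inter> S = {}"
      using exists_prime[OF R Aof_ideal[OF R Np x(1)] True S1 SR Sm] by auto
    have PR: "P \<subseteq> R" using P(1) unfolding prime_ideal_of_def ideal_of_def by blast
    have PM: "P \<subseteq> M"
    proof
      fix p assume p: "p \<in> P"
      show "p \<in> M"
      proof (rule ccontr)
        assume "p \<notin> M"
        then have "p * 1 \<in> S" using p PR N1 sr1[OF R] by (intro SI) auto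
        then show False using p P(3) by auto
      qed
    qed
    have PN: "P \<subseteq> N"
    proof
      fix p assume p: "p \<in> P"
      show "p \<in> N"
      proof (rule ccontr)
        assume "p \<notin> N"
        then have "1 * p \<in> S" using p PR M1 sr1[OF R] by (intro SI) auto
        then show False using p P(3) by auto
      qed
    qed
    have "x \<in> P" using P(2) x_in_Aof[OF R N x(1)] by auto
    then have "P \<noteq> {0}" using x(2) by auto
    then have "\<exists>!M. maximal_ideal_of R M \<and> P \<subseteq> M" using H P(1) by simp
    then have "M = N" using M N PM PN by auto
    then show ?thesis using MN by simp
  next
    case False
    then obtain z where z: "z \<in> Aof R N x" "z \<in> S" by auto
    obtain a b where ab: "z = a * b" "a \<in> R" "a \<notin> M" "b \<in> R" "b \<notin> N" using SE[OF z(2)] by blast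
    obtain s t where st: "s \<in> R" "s \<notin> N" "t \<in> R" "z * s = x * t" using z(1) by (metis AofE)
    have e: "a * (b * s) = x * t" using st(4) ab(1) by (simp add: algebra_simps)
    have "a \<in> Aof R N x"
      apply (rule AofI[OF _ _ _ _ e])
      using ab st R prime_mul[OF Np ab(4) st(1) ab(5) st(2)] by (auto intro: srmul)
    then show ?thesis using ab(3) by blast
  qed
qed


lemma locI: "a \<in> R \<Longrightarrow> s \<in> R \<Longrightarrow> s \<notin> M \<Longrightarrow> a / s \<in> localization R M"
  unfolding localization_def by blast

lemma locE: "y \<in> localization R M \<Longrightarrow> (\<And>a s. y = a / s \<Longrightarrow> a \<in> R \<Longrightarrow> s \<in> R \<Longrightarrow> s \<notin> M \<Longrightarrow> thesis) \<Longrightarrow> thesis"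
  unfolding localization_def by blast

lemma max_zero: "maximal_ideal_of R M \<Longrightarrow> 0 \<in> M"
  by (meson id0 max_ideal)

lemma loc_R: assumes "subring R" "maximal_ideal_of R M" "r \<in> R" shows "r \<in> localization R M"
proof -
  have "r / 1 \<in> localization R M" using assms max_one sr1 by (intro locI) auto
  then show ?thesis by simp
qed

lemma loc_mul: assumes R: "subring R" and M: "maximal_ideal_of R M"
  and y: "y \<in> localization R M" and z: "z \<in> localization R M"
  shows "y * z \<in> localization R M"
proof -
  obtain a s where 1: "y = a / s" "a \<in> R" "s \<in> R" "s \<notin> M" using y by (rule locE)
  obtain b t where 2: "z = b / t" "b \<in> R" "t \<in> R" "t \<notin> M" using z by (rule locE)
  have Mp: "prime_ideal_of R M" using maximal_prime R M by auto
  have "(a * b) / (s * t) \<in> localization R M"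
    using 1 2 R prime_mul[OF Mp 1(3) 2(3) 1(4) 2(4)] by (intro locI srmul) auto
  then show ?thesis using 1 2 by simp
qed

lemma loc_add: assumes R: "subring R" and M: "maximal_ideal_of R M"
  and y: "y \<in> localization R M" and z: "z \<in> localization R M"
  shows "y + z \<in> localization R M"
proof -
  obtain a s where 1: "y = a / s" "a \<in> R" "s \<in> R" "s \<notin> M" using y by (rule locE)
  obtain b t where 2: "z = b / t" "b \<in> R" "t \<in> R" "t \<notin> M" using z by (rule locE)
  have Mp: "prime_ideal_of R M" using maximal_prime R M by auto
  have s0: "s \<noteq> 0" and t0: "t \<noteq> 0" using 1 2 max_zero[OF M] by auto
  have "(a * t + b * s) / (s * t) \<in> localization R M"
    using 1 2 R prime_mul[OF Mp 1(3) 2(3) 1(4) 2(4)] by (intro locI srmul sradd) auto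
  moreover have "(a * t + b * s) / (s * t) = y + z" using 1 2 s0 t0 by (simp add: field_simps)
  ultimately show ?thesis by simp
qed

lemma sp_single: "a \<in> A \<Longrightarrow> b \<in> B \<Longrightarrow> a * b \<in> set_prod A B"
  unfolding set_prod_def
  apply (rule CollectI)
  apply (rule exI[of _ 1])
  apply (rule exI[of _ "\<lambda>_. a"])
  apply (rule exI[of _ "\<lambda>_. b"])
  by simp

lemma sum_closed: "0 \<in> C \<Longrightarrow> (\<And>u v. u \<in> C \<Longrightarrow> v \<in> C \<Longrightarrow> u + v \<in> C) \<Longrightarrow>
   (\<forall>i<(n::nat). f i \<in> C) \<Longrightarrow> (\<Sum>i<n. f i) \<in> C"
  by (induction n) auto

lemma sp_sub: assumes "\<And>a b. a \<in> A \<Longrightarrow> b \<in> B \<Longrightarrow> a * b \<in> C" "0 \<in> C"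
  "\<And>u v. u \<in> C \<Longrightarrow> v \<in> C \<Longrightarrow> u + v \<in> C"
  shows "set_prod A B \<subseteq> C"
proof
  fix z assume "z \<in> set_prod A B"
  then obtain n :: nat and a b where h: "\<forall>i<n. a i \<in> A \<and> b i \<in> B" "z = (\<Sum>i<n. a i * b i)"
    unfolding set_prod_def by blast
  have "(\<Sum>i<n. a i * b i) \<in> C" using h(1) assms by (intro sum_closed) auto
  then show "z \<in> C" using h(2) by simp
qed

lemma Aof_loc_princ:
  assumes R: "subring R" and N: "maximal_ideal_of R N" and x: "x \<in> R" "x \<noteq> 0"
    and H: "\<forall>P. prime_ideal_of R P \<and> P \<noteq> {0} \<longrightarrow> (\<exists>!M. maximal_ideal_of R M \<and> P \<subseteq> M)"
  shows "locally_principal R (Aof R N x)"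
  unfolding locally_principal_def ext_ideal_def
proof (intro allI impI)
  fix M assume M: "maximal_ideal_of R M"
  let ?L = "localization R M"
  let ?A = "Aof R N x"
  have Np: "prime_ideal_of R N" using maximal_prime R N by auto
  show "\<exists>c. set_prod ?A ?L = (\<lambda>y. c * y) ` ?L"
  proof (cases "M = N")
    case True
    have "set_prod ?A ?L = (\<lambda>y. x * y) ` ?L"
    proof
      show "set_prod ?A ?L \<subseteq> (\<lambda>y. x * y) ` ?L"
      proof (rule sp_sub)
        fix a b assume a: "a \<in> ?A" and b: "b \<in> ?L"
        obtain s t where h: "a \<in> R" "s \<in> R" "s \<notin> N" "t \<in> R" "a * s = x * t" using a by (rule AofE)
        have s0: "s \<noteq> 0" using h max_zero[OF N] by auto
        have ts: "t / s \<in> ?L" using h True by (intro locI) auto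
        have "(t / s) * b \<in> ?L" using loc_mul[OF R M ts b] .
        moreover have "a * b = x * ((t / s) * b)"
        proof -
          have "a = x * t / s" using h(5) s0 by (simp add: field_simps)
          then show ?thesis by simp
        qed
        ultimately show "a * b \<in> (\<lambda>y. x * y) ` ?L" by (rule rev_image_eqI)
      next
        have "0 \<in> ?L" using loc_R[OF R M sr0[OF R]] .
        then show "0 \<in> (\<lambda>y. x * y) ` ?L" by (rule rev_image_eqI) simp
      next
        fix u v assume "u \<in> (\<lambda>y. x * y) ` ?L" "v \<in> (\<lambda>y. x * y) ` ?L"
        then obtain u' v' where "u = x * u'" "v = x * v'" "u' \<in> ?L" "v' \<in> ?L" by auto
        moreover have "u' + v' \<in> ?L" using loc_add[OF R M] calculation by simp
        ultimately show "u + v \<in> (\<lambda>y. x * y) ` ?L" by (intro rev_image_eqI[of "u' + v'"]) (auto simp: algebra_simps)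
      qed
    next
      show "(\<lambda>y. x * y) ` ?L \<subseteq> set_prod ?A ?L"
      proof
        fix z assume "z \<in> (\<lambda>y. x * y) ` ?L"
        then obtain l where "z = x * l" "l \<in> ?L" by auto
        then show "z \<in> set_prod ?A ?L" using sp_single x_in_Aof[OF R N x(1)] by simp
      qed
    qed
    then show ?thesis by blast
  next
    case False
    obtain a where a: "a \<in> ?A" "a \<notin> M" using Aof_not_in[OF R N M False x H] by blast
    have aR: "a \<in> R" using a(1) by (rule AofE)
    have a0: "a \<noteq> 0" using a max_zero[OF M] by auto
    have "set_prod ?A ?L = (\<lambda>y. 1 * y) ` ?L"
    proof
      show "set_prod ?A ?L \<subseteq> (\<lambda>y. 1 * y) ` ?L"
      proof (rule sp_sub)
        fix a' b assume a': "a' \<in> ?A" and b: "b \<in> ?L"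
        have "a' \<in> R" using a' by (rule AofE)
        then have "a' \<in> ?L" using loc_R[OF R M] by simp
        then have "a' * b \<in> ?L" using loc_mul[OF R M _ b] by simp
        then show "a' * b \<in> (\<lambda>y. 1 * y) ` ?L" by simp
      next
        show "0 \<in> (\<lambda>y. 1 * y) ` ?L" using loc_R[OF R M sr0[OF R]] by simp
      next
        fix u v assume "u \<in> (\<lambda>y. 1 * y) ` ?L" "v \<in> (\<lambda>y. 1 * y) ` ?L"
        then show "u + v \<in> (\<lambda>y. 1 * y) ` ?L" using loc_add[OF R M] by auto
      qed
    next
      show "(\<lambda>y. 1 * y) ` ?L \<subseteq> set_prod ?A ?L"
      proof
        fix z assume "z \<in> (\<lambda>y. 1 * y) ` ?L"
        then have z: "z \<in> ?L" by auto
        obtain r s where h: "z = r / s" "r \<in> R" "s \<in> R" "s \<notin> M" using z by (rule locE)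
        have Mp: "prime_ideal_of R M" using maximal_prime R M by auto
        have "r / (s * a) \<in> ?L" using h aR a(2) R prime_mul[OF Mp h(3) aR h(4) a(2)]
          by (intro locI srmul) auto
        then have "a * (r / (s * a)) \<in> set_prod ?A ?L" by (rule sp_single[OF a(1)])
        moreover have "a * (r / (s * a)) = z" using h a0 by (simp add: field_simps)
        ultimately show "z \<in> set_prod ?A ?L" by simp
      qed
    qed
    then show ?thesis by blast
  qed
qed


lemma sum_lemma:
  assumes R: "subring R" and N: "prime_ideal_of R N"
  shows "(\<forall>i<(n::nat). a i \<in> Aof R N x \<and> y i \<in> colon R (Aof R N x) \<and> x * y i \<in> N) \<Longrightarrow>
    \<exists>s\<in>R. s \<notin> N \<and> (\<Sum>i<n. a i * y i) * s \<in> N"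
proof (induction n)
  case 0
  have "1 \<notin> N" using N sr1[OF R] id_one[OF R] unfolding prime_ideal_of_def by blast
  moreover have "0 \<in> N" using N prime_ideal id0 by blast
  ultimately show ?case using sr1[OF R] by auto
next
  case (Suc n)
  then obtain s where s: "s \<in> R" "s \<notin> N" "(\<Sum>i<n. a i * y i) * s \<in> N" by auto
  have hn: "a n \<in> Aof R N x" "x * y n \<in> N" using Suc.prems by auto
  obtain sn tn where h: "sn \<in> R" "sn \<notin> N" "tn \<in> R" "a n * sn = x * tn" using hn(1) by (rule AofE)
  let ?\<sigma> = "\<Sum>i<n. a i * y i"
  have "(?\<sigma> + a n * y n) * (s * sn) = (?\<sigma> * s) * sn + (a n * sn) * (y n * s)"
    by (simp add: algebra_simps)
  also have "\<dots> = (?\<sigma> * s) * sn + (x * y n) * (tn * s)" using h(4) by (simp add: algebra_simps)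
  also have "\<dots> \<in> N"
  proof -
    have Ni: "ideal_of R N" using N by (rule prime_ideal)
    have "(?\<sigma> * s) * sn \<in> N" using idmul2[OF Ni h(1) s(3)] .
    moreover have "(x * y n) * (tn * s) \<in> N" using idmul2[OF Ni srmul[OF R h(3) s(1)] hn(2)] .
    ultimately show ?thesis using idadd[OF Ni] by blast
  qed
  finally have "(\<Sum>i<Suc n. a i * y i) * (s * sn) \<in> N" by simp
  moreover have "s * sn \<in> R" using srmul[OF R s(1) h(1)] .
  moreover have "s * sn \<notin> N" using prime_mul[OF N s(1) h(1) s(2) h(2)] .
  ultimately show ?case by blast
qed

lemma exists_y:
  assumes R: "subring R" and N: "maximal_ideal_of R N" and x: "x \<in> R"
    and inv: "invertible_in R (Aof R N x)"
  shows "\<exists>y\<in>colon R (Aof R N x). x * y \<notin> N"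
proof (rule ccontr)
  assume c: "\<not> ?thesis"
  have Np: "prime_ideal_of R N" using maximal_prime R N by auto
  have "1 \<in> set_prod (Aof R N x) (colon R (Aof R N x))" using inv sr1[OF R] unfolding invertible_in_def by simp
  then obtain n :: nat and a y where h: "\<forall>i<n. a i \<in> Aof R N x \<and> y i \<in> colon R (Aof R N x)"
    "1 = (\<Sum>i<n. a i * y i)"
    unfolding set_prod_def by blast
  have "\<forall>i<n. a i \<in> Aof R N x \<and> y i \<in> colon R (Aof R N x) \<and> x * y i \<in> N" using h(1) c by blast
  then obtain s where "s \<in> R" "s \<notin> N" "(\<Sum>i<n. a i * y i) * s \<in> N" using sum_lemma[OF R Np] by blast
  then show False using h(2) by simp
qed

lemma xy_in:
  assumes R: "subring R" and M: "maximal_ideal_of R M" and xM: "x \<in> M"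
    and a: "a \<in> A" "a \<notin> M" and AR: "A \<subseteq> R" and xA: "x \<in> A" and y: "y \<in> colon R A"
  shows "x * y \<in> M"
proof -
  have Mp: "prime_ideal_of R M" using maximal_prime R M by auto
  have Mi: "ideal_of R M" using M by (rule max_ideal)
  have ya: "y * a \<in> R" and yx: "y * x \<in> R" using y a xA unfolding colon_def by auto
  have "x * (y * a) \<in> M" using idmul2[OF Mi ya xM] .
  then have "a * (x * y) \<in> M" by (simp add: algebra_simps)
  moreover have "a \<in> R" using a AR by auto
  moreover have "x * y \<in> R" using yx by (simp add: mult.commute)
  ultimately show ?thesis using Mp a(2) unfolding prime_ideal_of_def by blast
qed

theorem theorem12:
  fixes R :: "'k::field set"
  assumes "subring R"
    and "quotient_field_is_UNIV R"
    and "R \<noteq> UNIV"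
    and "finitely_stable R"
    and "LPI_domain R"
    and "\<forall>P. prime_ideal_of R P \<and> P \<noteq> {0} \<longrightarrow>
           (\<exists>!M. maximal_ideal_of R M \<and> P \<subseteq> M)"
  shows "finite_character R"
  unfolding finite_character_def
proof (intro ballI impI)
  note R = assms(1) and H = assms(6)
  fix x assume x: "x \<in> R" "x \<noteq> 0"
  let ?T = "{M. maximal_ideal_of R M \<and> x \<in> M}"
  show "finite ?T"
  proof (rule ccontr)
    assume inf: "infinite ?T"
    define J where "J = {r \<in> R. finite {M. maximal_ideal_of R M \<and> x \<in> M \<and> r \<notin> M}}"
    have Jid: "ideal_of R J"
      unfolding ideal_of_def
    proof (intro conjI ballI subsetI)
      fix r assume "r \<in> J" then show "r \<in> R" unfolding J_def by simp
    next
      have "{M. maximal_ideal_of R M \<and> x \<in> M \<and> 0 \<notin> M} = {}" using max_zero by blast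
      then have "0 \<in> R \<and> finite {M. maximal_ideal_of R M \<and> x \<in> M \<and> 0 \<notin> M}" using sr0[OF R] by (metis finite.emptyI)
      then show "0 \<in> J" unfolding J_def by (rule CollectI)
    next
      fix a b assume ab: "a \<in> J" "b \<in> J"
      have "{M. maximal_ideal_of R M \<and> x \<in> M \<and> a + b \<notin> M} \<subseteq>
            {M. maximal_ideal_of R M \<and> x \<in> M \<and> a \<notin> M} \<union> {M. maximal_ideal_of R M \<and> x \<in> M \<and> b \<notin> M}"
        using idadd max_ideal by blast
      moreover have "finite ({M. maximal_ideal_of R M \<and> x \<in> M \<and> a \<notin> M} \<union> {M. maximal_ideal_of R M \<and> x \<in> M \<and> b \<notin> M})"
        using ab unfolding J_def by simp
      ultimately have "finite {M. maximal_ideal_of R M \<and> x \<in> M \<and> a + b \<notin> M}" by (rule finite_subset)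
      moreover have "a + b \<in> R" using ab sradd[OF R] unfolding J_def by simp
      ultimately show "a + b \<in> J" unfolding J_def by simp
    next
      fix c a assume c: "c \<in> R" and a: "a \<in> J"
      have "{M. maximal_ideal_of R M \<and> x \<in> M \<and> c * a \<notin> M} \<subseteq> {M. maximal_ideal_of R M \<and> x \<in> M \<and> a \<notin> M}"
        using idmul max_ideal c by blast
      moreover have "finite {M. maximal_ideal_of R M \<and> x \<in> M \<and> a \<notin> M}" using a unfolding J_def by simp
      ultimately have "finite {M. maximal_ideal_of R M \<and> x \<in> M \<and> c * a \<notin> M}" by (rule finite_subset)
      moreover have "c * a \<in> R" using a c srmul[OF R] unfolding J_def by simp
      ultimately show "c * a \<in> J" unfolding J_def by simp
    qed
    have "{M. maximal_ideal_of R M \<and> x \<in> M \<and> 1 \<notin> M} = ?T" using max_one[OF R] by blast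
    then have "1 \<notin> J" using inf unfolding J_def by simp
    then obtain M where M: "maximal_ideal_of R M" "J \<subseteq> M" using exists_maximal[OF R Jid] by blast
    have "{M. maximal_ideal_of R M \<and> x \<in> M \<and> x \<notin> M} = {}" by blast
    then have "x \<in> J" using x unfolding J_def by simp
    then have xM: "x \<in> M" using M by blast
    let ?A = "Aof R M x"
    have Mp: "prime_ideal_of R M" using maximal_prime R M(1) by auto
    have Aid: "ideal_of R ?A" using Aof_ideal[OF R Mp x(1)] .
    have xA: "x \<in> ?A" using x_in_Aof[OF R M(1) x(1)] .
    have AR: "?A \<subseteq> R" using Aid unfolding ideal_of_def by blast
    have "nonzero_ideal R ?A" unfolding nonzero_ideal_def using Aid xA x(2) by blast
    moreover have "locally_principal R ?A" using Aof_loc_princ[OF R M(1) x H] .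
    ultimately have "invertible_in R ?A" using assms(5) unfolding LPI_domain_def by blast
    then obtain y where y: "y \<in> colon R ?A" "x * y \<notin> M" using exists_y[OF R M(1) x(1)] by blast
    have xyR: "x * y \<in> R" using y(1) xA unfolding colon_def by (simp add: mult.commute)
    have "{M'. maximal_ideal_of R M' \<and> x \<in> M' \<and> x * y \<notin> M'} \<subseteq> {M}"
    proof
      fix M' assume "M' \<in> {M'. maximal_ideal_of R M' \<and> x \<in> M' \<and> x * y \<notin> M'}"
      then have M': "maximal_ideal_of R M'" "x \<in> M'" "x * y \<notin> M'" by auto
      show "M' \<in> {M}"
      proof (rule ccontr)
        assume "M' \<notin> {M}"
        then have "M' \<noteq> M" by simp
        then obtain a where a: "a \<in> ?A" "a \<notin> M'" using Aof_not_in[OF R M(1) M'(1) _ x H] by blast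
        have "x * y \<in> M'" using xy_in[OF R M'(1) M'(2) a AR xA y(1)] .
        then show False using M'(3) by simp
      qed
    qed
    then have "finite {M'. maximal_ideal_of R M' \<and> x \<in> M' \<and> x * y \<notin> M'}" by (rule finite_subset) simp
    then have "x * y \<in> J" using xyR unfolding J_def by simp
    then show False using M(2) y(2) by blast
  qed
qed

end
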